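(* For all positive integers $m,n$, $\Lambda(m,n)=\left([0,1)^{m\times n}\times[0,1)^m\right)\setminus\mathbf{Bad}(m,n)$.
   Context: $[0,1)^{m\times n}$ is the set of real $m\times n$ matrices with entries in $[0,1)$. For $\boldsymbol{x}\in\mathbb{R}^n$, $\|\boldsymbol{x}\|=\max_i|x_i|$; for $\boldsymbol{y}\in\mathbb{R}^m$, $\langle\boldsymbol{y}\rangle=\min_{\boldsymbol{p}\in\mathbb{Z}^m}\|\boldsymbol{y}-\boldsymbol{p}\|$. For $\psi:\mathbb{N}\to[0,\infty)$, $W_{m,n}(\psi)$ is the set of pairs $(A,\boldsymbol{\gamma})\in[0,1)^{m\times n}\times[0,1)^m$ such that $\langle A\boldsymbol{q}-\boldsymbol{\gamma}\rangle<\psi(\|\boldsymbol{q}\|)$ for infinitely many $\boldsymbol{q}\in\mathbb{Z}^n$. "Decreasing" means non-increasing. $\mathcal{C}$ is the set of decreasing $\psi:\mathbb{N}\to[0,\infty)$ with $\sum_{q\ge1}q^{n-1}\psi(q)^m<\infty$. $\Lambda(m,n)=\bigcup_{\psi\in\mathcal{C}}W_{m,n}(\psi)$. $\mathbf{Bad}(m,n)=\{(A,\boldsymbol{\gamma})\in[0,1)^{m\times n}\times[0,1)^m:\liminf_{\boldsymbol{q}\in\mathbb{Z}^n,\|\boldsymbol{q}\|\to\infty}\|\boldsymbol{q}\|^n\langle A\boldsymbol{q}-\boldsymbol{\gamma}\rangle^m>0\}$. *)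

theory Defs
  imports "HOL-Analysis.Analysis"
begin

definition maxnorm :: "real^'n \<Rightarrow> real" where
  "maxnorm x = Max (range (\<lambda>i. \<bar>x $ i\<bar>))"

definition int_maxnorm :: "int^'n \<Rightarrow> nat" where
  "int_maxnorm q = Max (range (\<lambda>i. nat \<bar>q $ i\<bar>))"

definition int_to_real_vec :: "int^'n \<Rightarrow> real^'n" where
  "int_to_real_vec q = (\<chi> i. real_of_int (q $ i))"

definition dist_Zm :: "real^'m \<Rightarrow> real" where
  "dist_Zm y = (INF p\<in>(UNIV :: (int^'m) set). maxnorm (y - int_to_real_vec p))"

definition unit_matrices :: "(real^'n^'m) set" where
  "unit_matrices = {A. \<forall>i j. 0 \<le> A $ i $ j \<and> A $ i $ j < 1}"

definition unit_vectors :: "(real^'m) set" where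
  "unit_vectors = {g. \<forall>i. 0 \<le> g $ i \<and> g $ i < 1}"

definition W_set :: "(nat \<Rightarrow> real) \<Rightarrow> ((real^'n^'m) \<times> (real^'m)) set" where
  "W_set \<psi> = {(A, \<gamma>). A \<in> unit_matrices \<and> \<gamma> \<in> unit_vectors \<and>
      infinite {q :: int^'n. dist_Zm (A *v int_to_real_vec q - \<gamma>) < \<psi> (int_maxnorm q)}}"

text \<open>The class C: psi on N = {1,2,...} (value at 0 irrelevant), non-negative,
  non-increasing, with sum_{q>=1} q^(n-1) psi(q)^m < infinity.\<close>
definition class_C :: "nat \<Rightarrow> nat \<Rightarrow> (nat \<Rightarrow> real) set" where
  "class_C m n = {\<psi>. (\<forall>q\<ge>1. 0 \<le> \<psi> q) \<and> (\<forall>a b. 1 \<le> a \<longrightarrow> a \<le> b \<longrightarrow> \<psi> b \<le> \<psi> a) \<and>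
      summable (\<lambda>k. real (Suc k) ^ (n - 1) * \<psi> (Suc k) ^ m)}"

definition Lambda_set :: "((real^'n^'m) \<times> (real^'m)) set" where
  "Lambda_set = (\<Union>\<psi>\<in>class_C CARD('m) CARD('n). W_set \<psi>)"

definition Bad_set :: "((real^'n^'m) \<times> (real^'m)) set" where
  "Bad_set = {(A, \<gamma>). A \<in> unit_matrices \<and> \<gamma> \<in> unit_vectors \<and>
      Liminf (filtercomap int_maxnorm at_top)
        (\<lambda>q :: int^'n. ereal (real (int_maxnorm q) ^ CARD('n) *
           dist_Zm (A *v int_to_real_vec q - \<gamma>) ^ CARD('m))) > 0}"

end

theory Submission
  imports Defs
begin

lemma maxnorm_nonneg: "0 \<le> maxnorm (x :: real^'n)"
proof -
  obtain i :: 'n where True by simp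
  have "\<bar>x $ i\<bar> \<le> maxnorm x" unfolding maxnorm_def
    by (rule Max_ge) auto
  then show ?thesis by linarith
qed

lemma dist_Zm_nonneg: "0 \<le> dist_Zm (y :: real^'m)"
  unfolding dist_Zm_def by (rule cINF_greatest) (auto simp: maxnorm_nonneg)

lemma int_maxnorm_ge: "nat \<bar>q $ i\<bar> \<le> int_maxnorm (q :: int^'n)"
  unfolding int_maxnorm_def by (rule Max_ge) auto

lemma finite_norm_le: "finite {q :: int^'n. int_maxnorm q \<le> N}"
proof -
  let ?S = "{- int N..int N}"
  have "{q :: int^'n. int_maxnorm q \<le> N} \<subseteq> vec_lambda ` (PiE UNIV (\<lambda>_. ?S))"
  proof
    fix q :: "int^'n" assume "q \<in> {q. int_maxnorm q \<le> N}"
    then have "\<forall>i. q $ i \<in> ?S"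
    proof (intro allI)
      fix i
      have "nat \<bar>q $ i\<bar> \<le> N" using int_maxnorm_ge[of q i] \<open>q \<in> _\<close> by auto
      then show "q $ i \<in> ?S" by auto
    qed
    then have "(\<lambda>i. q $ i) \<in> PiE UNIV (\<lambda>_. ?S)" by auto
    then show "q \<in> vec_lambda ` (PiE UNIV (\<lambda>_. ?S))"
      by (metis image_eqI vec_lambda_eta)
  qed
  moreover have "finite (vec_lambda ` (PiE UNIV (\<lambda>_. ?S)) :: (int^'n) set)"
    by (intro finite_imageI finite_PiE) auto
  ultimately show ?thesis by (rule finite_subset)
qed

lemma ev_comap: "eventually P (filtercomap int_maxnorm at_top) \<longleftrightarrow>
   (\<exists>N. \<forall>q::int^'n. N \<le> int_maxnorm q \<longrightarrow> P q)"
  unfolding eventually_filtercomap eventually_at_top_linorder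
  by (metis order_refl)

lemma Liminf_pos_iff:
  fixes g :: "int^'n \<Rightarrow> real"
  shows "0 < Liminf (filtercomap int_maxnorm at_top) (\<lambda>q. ereal (g q)) \<longleftrightarrow>
     (\<exists>e>0. \<exists>N. \<forall>q. N \<le> int_maxnorm q \<longrightarrow> e \<le> g q)"
proof
  assume "0 < Liminf (filtercomap int_maxnorm at_top) (\<lambda>q. ereal (g q))"
  then obtain z where z: "0 < z" "z < Liminf (filtercomap int_maxnorm at_top) (\<lambda>q. ereal (g q))"
    using dense by blast
  then have "eventually (\<lambda>q. z < ereal (g q)) (filtercomap int_maxnorm at_top)"
    by (intro less_LiminfD)
  then obtain N where N: "\<forall>q::int^'n. N \<le> int_maxnorm q \<longrightarrow> z < ereal (g q)"
    unfolding ev_comap by blast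
  have zfin: "z \<noteq> \<infinity>" using z(2) by auto
  define e where "e = real_of_ereal z"
  have ze: "z = ereal e" using z(1) zfin unfolding e_def by (cases z) auto
  show "\<exists>e>0. \<exists>N. \<forall>q. N \<le> int_maxnorm q \<longrightarrow> e \<le> g q"
    using N z(1) ze by (intro exI[of _ e] conjI exI[of _ N]) (auto intro: less_imp_le)
next
  assume "\<exists>e>0. \<exists>N. \<forall>q. N \<le> int_maxnorm q \<longrightarrow> e \<le> g q"
  then obtain e N where e: "e > 0" "\<forall>q. N \<le> int_maxnorm q \<longrightarrow> e \<le> g q" by blast
  have "ereal e \<le> Liminf (filtercomap int_maxnorm at_top) (\<lambda>q. ereal (g q))"
    unfolding le_Liminf_iff
  proof (intro allI impI)
    fix y assume "y < ereal e"
    then show "eventually (\<lambda>q. y < ereal (g q)) (filtercomap int_maxnorm at_top)"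
      unfolding ev_comap using e(2) by (meson ereal_less_eq(3) order_less_le_trans)
  qed
  then show "0 < Liminf (filtercomap int_maxnorm at_top) (\<lambda>q. ereal (g q))"
    using e(1) by (metis ereal_less(2) order_less_le_trans)
qed


lemma C_decay:
  assumes C: "\<psi> \<in> class_C m n" and n1: "1 \<le> n" and e: "e > 0"
  shows "\<exists>N0. \<forall>q\<ge>N0. real q ^ n * \<psi> q ^ m \<le> e"
proof -
  define a where "a k = real (Suc k) ^ (n - 1) * \<psi> (Suc k) ^ m" for k
  have nonneg: "\<And>q. q \<ge> 1 \<Longrightarrow> 0 \<le> \<psi> q" and dec: "\<And>a b. 1 \<le> a \<Longrightarrow> a \<le> b \<Longrightarrow> \<psi> b \<le> \<psi> a"
    and sm: "summable a" using C unfolding class_C_def a_def by auto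
  define e' where "e' = e / 2 ^ n"
  have e': "e' > 0" using e unfolding e'_def by simp
  obtain M where M: "\<forall>i\<ge>M. \<forall>j. norm (sum a {i..<j}) < e'"
    using sm e' unfolding summable_Cauchy by blast
  show ?thesis
  proof (intro exI[of _ "2*M+2"] allI impI)
    fix q assume q: "2*M+2 \<le> q"
    have hM: "q div 2 \<ge> M" using q by linarith
    have q1: "q \<ge> 1" using q by simp
    have psq: "0 \<le> \<psi> q" using nonneg q1 .
    have lower: "(real q / 2) ^ (n-1) * \<psi> q ^ m \<le> a k" if k: "k \<in> {q div 2..<q}" for k
    proof -
      have k1: "real q / 2 \<le> real (Suc k)" using k by auto
      have "\<psi> q \<le> \<psi> (Suc k)" using k by (intro dec) auto
      then have "\<psi> q ^ m \<le> \<psi> (Suc k) ^ m" using psq by (intro power_mono) auto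
      moreover have "(real q / 2) ^ (n-1) \<le> real (Suc k) ^ (n-1)"
        using k1 by (intro power_mono) auto
      ultimately show ?thesis unfolding a_def
        by (intro mult_mono) (auto simp: psq)
    qed
    have "real (card {q div 2..<q}) * ((real q / 2) ^ (n-1) * \<psi> q ^ m) \<le> sum a {q div 2..<q}"
      using sum_mono[of "{q div 2..<q}" "\<lambda>_. (real q / 2) ^ (n-1) * \<psi> q ^ m" a] lower
      by (simp only: sum_constant)
    moreover have "real q / 2 \<le> real (card {q div 2..<q})" by simp
    ultimately have "(real q / 2) * ((real q / 2) ^ (n-1) * \<psi> q ^ m) \<le> sum a {q div 2..<q}"
      using mult_right_mono[of "real q / 2" "real (card {q div 2..<q})" "(real q / 2) ^ (n-1) * \<psi> q ^ m"] psq
      by simp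
    moreover have "(real q / 2) * ((real q / 2) ^ (n-1) * \<psi> q ^ m) = real q ^ n * \<psi> q ^ m / 2 ^ n"
    proof -
      have "(real q / 2) * (real q / 2) ^ (n-1) = (real q / 2) ^ n"
        using n1 by (metis One_nat_def Suc_pred' less_eq_Suc_le power_Suc)
      then show ?thesis by (metis (no_types, lifting) mult.assoc times_divide_eq_right divide_divide_eq_left power_divide mult.commute)
    qed
    moreover have "sum a {q div 2..<q} < e'"
    proof -
      have "norm (sum a {q div 2..<q}) < e'" using M hM by blast
      then show ?thesis by simp
    qed
    ultimately have "real q ^ n * \<psi> q ^ m / 2 ^ n < e'" by linarith
    then show "real q ^ n * \<psi> q ^ m \<le> e" unfolding e'_def by (simp add: divide_simps)
  qed
qed


lemma dir1:
  fixes A :: "real^'n^'m" and \<gamma> :: "real^'m"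
  assumes C: "\<psi> \<in> class_C CARD('m) CARD('n)" and W: "(A, \<gamma>) \<in> W_set \<psi>"
  shows "(A, \<gamma>) \<notin> Bad_set"
proof
  let ?d = "\<lambda>q::int^'n. dist_Zm (A *v int_to_real_vec q - \<gamma>)"
  let ?g = "\<lambda>q::int^'n. real (int_maxnorm q) ^ CARD('n) * ?d q ^ CARD('m)"
  assume "(A, \<gamma>) \<in> Bad_set"
  then have "0 < Liminf (filtercomap int_maxnorm at_top) (\<lambda>q. ereal (?g q))"
    unfolding Bad_set_def by auto
  then obtain e N where e: "e > 0" "\<forall>q. N \<le> int_maxnorm q \<longrightarrow> e \<le> ?g q"
    unfolding Liminf_pos_iff by blast
  obtain N0 where N0: "\<forall>q\<ge>N0. real q ^ CARD('n) * \<psi> q ^ CARD('m) \<le> e"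
    using C_decay[OF C _ e(1)] by auto
  define S where "S = {q :: int^'n. ?d q < \<psi> (int_maxnorm q)}"
  have "infinite S" using W unfolding W_set_def S_def by auto
  then have "infinite (S - {q. int_maxnorm q \<le> max N N0 + 1})"
    by (rule Diff_infinite_finite[OF finite_norm_le])
  then have "S - {q. int_maxnorm q \<le> max N N0 + 1} \<noteq> {}" by (metis finite.emptyI)
  then obtain q where q: "q \<in> S" "\<not> int_maxnorm q \<le> max N N0 + 1"
    by blast
  have pos: "0 < real (int_maxnorm q) ^ CARD('n)" using q(2) by simp
  have "?d q ^ CARD('m) < \<psi> (int_maxnorm q) ^ CARD('m)"
    using q(1) dist_Zm_nonneg unfolding S_def by (intro power_strict_mono) auto
  then have "?g q < real (int_maxnorm q) ^ CARD('n) * \<psi> (int_maxnorm q) ^ CARD('m)"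
    using pos by simp
  also have "\<dots> \<le> e" using N0 q(2) by simp
  finally have "?g q < e" .
  moreover have "e \<le> ?g q" using e(2) q(2) by simp
  ultimately show False by linarith
qed


lemma dir2:
  fixes A :: "real^'n^'m" and \<gamma> :: "real^'m"
  assumes uA: "A \<in> unit_matrices" and ug: "\<gamma> \<in> unit_vectors" and nB: "(A, \<gamma>) \<notin> Bad_set"
  shows "\<exists>\<psi>\<in>class_C CARD('m) CARD('n). (A, \<gamma>) \<in> W_set \<psi>"
proof -
  define mm where "mm = CARD('m)"
  define nn where "nn = CARD('n)"
  have mm0: "0 < mm" and nn0: "0 < nn" unfolding mm_def nn_def by auto
  let ?d = "\<lambda>q::int^'n. dist_Zm (A *v int_to_real_vec q - \<gamma>)"
  define g where "g q = real (int_maxnorm q) ^ nn * ?d q ^ mm" for q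
  have "\<not> 0 < Liminf (filtercomap int_maxnorm at_top) (\<lambda>q. ereal (g q))"
    using nB uA ug unfolding Bad_set_def g_def mm_def nn_def by auto
  then have ex: "\<And>e N. e > 0 \<Longrightarrow> \<exists>q. N \<le> int_maxnorm q \<and> g q < e"
    unfolding Liminf_pos_iff by (meson not_less)
  define P where "P k (q::int^'n) \<longleftrightarrow> 1 \<le> int_maxnorm q \<and> g q < (1/2) ^ k" for k q
  define Q where "Q (k::nat) (q::int^'n) (q'::int^'n) \<longleftrightarrow> int_maxnorm q < int_maxnorm q'" for k q q'
  have "\<exists>f. \<forall>k. P k (f k) \<and> Q k (f k) (f (Suc k))"
  proof (rule dependent_nat_choice)
    show "\<exists>x. P 0 x" using ex[of 1 1] unfolding P_def by auto
  next
    fix x k assume "P k x"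
    obtain y where "int_maxnorm x + 1 \<le> int_maxnorm y" "g y < (1/2) ^ Suc k"
      using ex[of "(1/2) ^ Suc k" "int_maxnorm x + 1"] by auto
    then show "\<exists>y. P (Suc k) y \<and> Q k x y" unfolding P_def Q_def by (intro exI[of _ y]) auto
  qed
  then obtain qs where qs: "\<And>k. P k (qs k)" "\<And>k. Q k (qs k) (qs (Suc k))" by blast
  define N where "N k = int_maxnorm (qs k)" for k
  have smN: "strict_mono N" unfolding strict_mono_Suc_iff N_def using qs(2) Q_def by auto
  have N1: "1 \<le> N k" for k using qs(1) unfolding P_def N_def by auto
  have Nk: "k \<le> N k" for k using seq_suble[OF smN] .
  define b where "b k = 2 * (1/2) ^ k / real (N k) ^ nn" for k
  define c where "c k = root mm (b k)" for k
  have b0: "0 < b k" for k unfolding b_def using N1[of k] by simp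
  have cb: "c k ^ mm = b k" for k unfolding c_def using mm0 b0[of k] by simp
  have c0: "0 \<le> c k" for k unfolding c_def using b0[of k] by (simp add: real_root_ge_zero)
  have cmono: "c j \<le> c i" if "i \<le> j" for i j
  proof -
    have "N i \<le> N j" using smN that by (simp add: strict_mono_leD)
    then have "real (N i) ^ nn \<le> real (N j) ^ nn" by (intro power_mono) auto
    moreover have "(1/2::real) ^ j \<le> (1/2) ^ i" using that by (intro power_decreasing) auto
    ultimately have "b j \<le> b i" unfolding b_def using N1[of i]
      by (intro frac_le) auto
    then show ?thesis unfolding c_def using mm0 by simp
  qed
  define L where "L q = (LEAST k. q \<le> N k)" for q
  have Lex: "q \<le> N (L q)" for q unfolding L_def by (rule LeastI[of _ q]) (rule Nk)
  have Lle: "L q \<le> k" if "q \<le> N k" for q k unfolding L_def using that by (rule Least_le)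
  define \<psi> where "\<psi> q = c (L q)" for q
  have Leq: "L j = k" if "j \<le> N k" "\<And>l. l < k \<Longrightarrow> N l < j" for j k
    unfolding L_def using that by (intro Least_equality) (auto, meson leD leI)
  have LN: "L (N k) = k" for k
    by (rule Leq) (auto intro: strict_monoD[OF smN])
  define a where "a k = real (Suc k) ^ (nn - 1) * \<psi> (Suc k) ^ mm" for k
  have a0: "0 \<le> a k" for k unfolding a_def \<psi>_def using c0 by simp
  have aB: "a i \<le> b k * real (N k) ^ (nn - 1)" if "Suc i \<le> N k" "\<And>l. l < k \<Longrightarrow> N l < Suc i" for i k
  proof -
    have "\<psi> (Suc i) = c k" unfolding \<psi>_def using Leq[OF that] by simp
    moreover have "real (Suc i) ^ (nn - 1) \<le> real (N k) ^ (nn - 1)"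
      using that(1) by (intro power_mono) auto
    moreover have "a i = real (Suc i) ^ (nn - 1) * b k" unfolding a_def
      using \<open>\<psi> (Suc i) = c k\<close> cb[of k] by simp
    ultimately show ?thesis using b0[of k]
      by (metis mult.commute mult_left_mono less_imp_le)
  qed
  have bN: "b k * real (N k) ^ (nn - 1) * real (N k) = 2 * (1/2) ^ k" for k
  proof -
    have "real (N k) ^ (nn - 1) * real (N k) = real (N k) ^ nn"
      using nn0 power_Suc2[of "real (N k)" "nn-1"] by simp
    then have "b k * real (N k) ^ (nn - 1) * real (N k) = b k * real (N k) ^ nn"
      by (metis mult.assoc)
    also have "\<dots> = 2 * (1/2) ^ k" unfolding b_def using N1[of k] by simp
    finally show ?thesis .
  qed
  have part: "(\<Sum>i<N K. a i) \<le> 4 - 2 * (1/2) ^ K" for K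
  proof (induction K)
    case 0
    have "(\<Sum>i<N 0. a i) \<le> (\<Sum>i<N 0. b 0 * real (N 0) ^ (nn - 1))"
      by (intro sum_mono aB) auto
    also have "\<dots> = 2" using bN[of 0] by (simp add: mult.commute)
    finally show ?case by simp
  next
    case (Suc K)
    have NK: "N K \<le> N (Suc K)" using smN by (simp add: strict_mono_leD)
    have split: "{..<N (Suc K)} = {..<N K} \<union> {N K..<N (Suc K)}" using NK by auto
    have "(\<Sum>i<N (Suc K). a i) = (\<Sum>i<N K. a i) + (\<Sum>i\<in>{N K..<N (Suc K)}. a i)"
      unfolding split by (rule sum.union_disjoint) auto
    also have "(\<Sum>i\<in>{N K..<N (Suc K)}. a i) \<le> (\<Sum>i\<in>{N K..<N (Suc K)}. b (Suc K) * real (N (Suc K)) ^ (nn - 1))"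
    proof (intro sum_mono aB)
      fix i l assume "i \<in> {N K..<N (Suc K)}" "l < Suc K"
      moreover have "N l \<le> N K" using \<open>l < Suc K\<close> smN by (simp add: strict_mono_leD)
      ultimately show "N l < Suc i" by auto
    qed auto
    also have "\<dots> = real (N (Suc K) - N K) * (b (Suc K) * real (N (Suc K)) ^ (nn - 1))" by simp
    also have "\<dots> \<le> real (N (Suc K)) * (b (Suc K) * real (N (Suc K)) ^ (nn - 1))"
      using b0[of "Suc K"] by (intro mult_right_mono) auto
    also have "\<dots> = 2 * (1/2) ^ Suc K" using bN[of "Suc K"] by (simp add: mult.commute)
    finally show ?case using Suc.IH by simp
  qed
  have summ: "summable a"
  proof (rule summableI_nonneg_bounded[where x = 4])
    fix M
    have "(\<Sum>i<M. a i) \<le> (\<Sum>i<N M. a i)"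
      using Nk[of M] a0 by (intro sum_mono2) auto
    also have "\<dots> \<le> 4" using part[of M] zero_le_power[of "1/2::real" M] by linarith
    finally show "(\<Sum>i<M. a i) \<le> 4" .
  qed (rule a0)
  have C: "\<psi> \<in> class_C CARD('m) CARD('n)"
    unfolding class_C_def mem_Collect_eq
  proof (intro conjI allI impI)
    show "0 \<le> \<psi> q" for q unfolding \<psi>_def using c0 by simp
    show "\<psi> y \<le> \<psi> x" if "x \<le> y" for x y
      unfolding \<psi>_def using Lle[OF order.trans[OF that Lex]] by (rule cmono)
    show "summable (\<lambda>k. real (Suc k) ^ (CARD('n) - 1) * \<psi> (Suc k) ^ CARD('m))"
      using summ unfolding a_def mm_def nn_def .
  qed
  have inS: "?d (qs k) < \<psi> (int_maxnorm (qs k))" for k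
  proof -
    have pos: "0 < real (N k) ^ nn" using N1[of k] by simp
    have "real (N k) ^ nn * ?d (qs k) ^ mm < (1/2) ^ k" using qs(1)[of k] unfolding P_def g_def N_def by simp
    then have "?d (qs k) ^ mm < (1/2) ^ k / real (N k) ^ nn" using pos by (simp add: field_simps)
    also have "\<dots> < b k" unfolding b_def using pos by (simp add: divide_strict_right_mono)
    finally have "?d (qs k) ^ mm < c k ^ mm" using cb by simp
    then have "?d (qs k) < c k" using c0 by (rule power_less_imp_less_base)
    then show ?thesis unfolding \<psi>_def using LN[of k] N_def by simp
  qed
  have "inj qs"
  proof (rule injI)
    fix x y assume "qs x = qs y"
    then have "N x = N y" unfolding N_def by simp
    then show "x = y" using smN by (simp add: strict_mono_eq)
  qed
  then have "infinite (range qs)" by (rule range_inj_infinite)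
  moreover have "range qs \<subseteq> {q :: int^'n. ?d q < \<psi> (int_maxnorm q)}" using inS by auto
  ultimately have "infinite {q :: int^'n. ?d q < \<psi> (int_maxnorm q)}" using finite_subset by blast
  then have "(A, \<gamma>) \<in> W_set \<psi>" unfolding W_set_def using uA ug by simp
  with C show ?thesis by blast
qed

theorem theorem1p6:
  shows "(Lambda_set :: ((real^'n^'m) \<times> (real^'m)) set)
           = (unit_matrices \<times> unit_vectors) - Bad_set"
proof (intro equalityI subsetI)
  fix x assume "x \<in> (Lambda_set :: ((real^'n^'m) \<times> (real^'m)) set)"
  then obtain \<psi> where C: "\<psi> \<in> class_C CARD('m) CARD('n)" and W: "x \<in> W_set \<psi>"
    unfolding Lambda_set_def by blast
  obtain A \<gamma> where x: "x = (A, \<gamma>)" by (cases x)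
  have "A \<in> unit_matrices" "\<gamma> \<in> unit_vectors" using W unfolding x W_set_def by auto
  moreover have "(A, \<gamma>) \<notin> Bad_set" using dir1[OF C] W x by blast
  ultimately show "x \<in> (unit_matrices \<times> unit_vectors) - Bad_set" using x by simp
next
  fix x assume x0: "x \<in> (unit_matrices \<times> unit_vectors) - (Bad_set :: ((real^'n^'m) \<times> (real^'m)) set)"
  obtain A \<gamma> where x: "x = (A, \<gamma>)" by (cases x)
  have "\<exists>\<psi>\<in>class_C CARD('m) CARD('n). (A, \<gamma>) \<in> W_set \<psi>"
    using x0 x by (intro dir2) auto
  then show "x \<in> Lambda_set" unfolding Lambda_set_def x by blast
qed

end
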